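(* In the setting described in the context, consider the optimization problem $$\max_{\boldsymbol\alpha}\ \min_{(i,\theta_b)\in\Xi}W_i(\theta_b)G_i(\theta_b)\quad\text{subject to}\quad\sum_{i=1}^k\sum_{b=1}^B\alpha_i(\theta_b)=1,\ \alpha_i(\theta_b)\ge0.$$ An allocation $\boldsymbol\alpha$ is optimal for this problem if and only if it satisfies all of the following: (i) (global balance) for all $1\le b\le B$, $\ \alpha_{i^b}^2(\theta_b)/\lambda_{i^b}^2(\theta_b)=\sum_{i\ne i^b,\,i\ne i^*}\alpha_i^2(\theta_b)/\lambda_i^2(\theta_b)$; (ii) (pairwise balance) for all $(i,\theta_b),(j,\theta_{b'})\in\Xi$, $\ W_i(\theta_b)G_i(\theta_b)=W_j(\theta_{b'})G_j(\theta_{b'})$; (iii) $\alpha_{i^*}(\theta_b)=0$ for all $\theta_b\notin\Theta_{i^*}$.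
   Context: There are $k\ge2$ solutions and $B$ parameter values $\theta_1,\dots,\theta_B$ with probabilities $p_1,\dots,p_B>0$, $\sum_bp_b=1$. For each $i,b$, $y_i(\theta_b)$ is a real number (mean simulation output) and $\lambda_i(\theta_b)>0$ (simulation standard deviation). Each $i^b=\arg\min_iy_i(\theta_b)$ is assumed unique, and $i^*=\arg\max_i\sum_bp_b\mathbf 1\{i=i^b\}$ is assumed unique. Favorable sets: $\Theta_i=\{\theta_b:i^b=i\}$. For an allocation $\boldsymbol\alpha=(\alpha_i(\theta_b))$ and $i\ne i^b$, $$G_i(\theta_b)=\frac{(y_i(\theta_b)-y_{i^b}(\theta_b))^2}{2\left(\lambda_i^2(\theta_b)/\alpha_i(\theta_b)+\lambda_{i^b}^2(\theta_b)/\alpha_{i^b}(\theta_b)\right)},$$ with $G_i(\theta_b)=0$ if $\alpha_i(\theta_b)=0$ or $\alpha_{i^b}(\theta_b)=0$. Let $d_j=\sum_bp_b\mathbf 1\{i^*=i^b\}-\sum_bp_b\mathbf 1\{j=i^b\}$ and $\Xi=\{(i,\theta_b):i\ne i^*,i\ne i^b\}$. Balance weights for $(i,\theta_b)\in\Xi$: $$W_i(\theta_b)=\begin{cases}\max\left\{\min\left(\min_{j\ne i^*}d_j,\ d_i/2\right)/p_b,\ 1\right\},&\theta_b\in\Theta_{i^*},\\ \max\{d_i/p_b,1\},&\theta_b\notin\Theta_{i^*}.\end{cases}$$ *)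

theory Defs
  imports Complex_Main
begin

text \<open>Solutions are indexed by i in {0..<k}, parameter values theta_b by b in {0..<B}.
  y i b = y_i(theta_b), lam i b = lambda_i(theta_b), p b = p_b,
  an allocation is al :: nat => nat => real with al i b = alpha_i(theta_b).\<close>

definition ibest :: "nat \<Rightarrow> (nat \<Rightarrow> nat \<Rightarrow> real) \<Rightarrow> nat \<Rightarrow> nat" where
  "ibest k y b = (THE i. i < k \<and> (\<forall>j<k. y i b \<le> y j b))"

definition freq :: "nat \<Rightarrow> nat \<Rightarrow> (nat \<Rightarrow> real) \<Rightarrow> (nat \<Rightarrow> nat \<Rightarrow> real) \<Rightarrow> nat \<Rightarrow> real" where
  "freq k B p y i = (\<Sum>b<B. p b * (if i = ibest k y b then 1 else 0))"

definition istar :: "nat \<Rightarrow> nat \<Rightarrow> (nat \<Rightarrow> real) \<Rightarrow> (nat \<Rightarrow> nat \<Rightarrow> real) \<Rightarrow> nat" where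
  "istar k B p y = (THE i. i < k \<and> (\<forall>j<k. freq k B p y j \<le> freq k B p y i))"

definition Gval :: "nat \<Rightarrow> (nat \<Rightarrow> nat \<Rightarrow> real) \<Rightarrow> (nat \<Rightarrow> nat \<Rightarrow> real)
    \<Rightarrow> (nat \<Rightarrow> nat \<Rightarrow> real) \<Rightarrow> nat \<Rightarrow> nat \<Rightarrow> real" where
  "Gval k y lam al i b =
     (let ib = ibest k y b in
      if al i b = 0 \<or> al ib b = 0 then 0
      else (y i b - y ib b)\<^sup>2 / (2 * ((lam i b)\<^sup>2 / al i b + (lam ib b)\<^sup>2 / al ib b)))"

definition dgap :: "nat \<Rightarrow> nat \<Rightarrow> (nat \<Rightarrow> real) \<Rightarrow> (nat \<Rightarrow> nat \<Rightarrow> real) \<Rightarrow> nat \<Rightarrow> real" where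
  "dgap k B p y j = freq k B p y (istar k B p y) - freq k B p y j"

definition Wt :: "nat \<Rightarrow> nat \<Rightarrow> (nat \<Rightarrow> real) \<Rightarrow> (nat \<Rightarrow> nat \<Rightarrow> real) \<Rightarrow> nat \<Rightarrow> nat \<Rightarrow> real" where
  "Wt k B p y i b =
     (if ibest k y b = istar k B p y
      then max (min (Min {dgap k B p y j | j. j < k \<and> j \<noteq> istar k B p y}) (dgap k B p y i / 2) / p b) 1
      else max (dgap k B p y i / p b) 1)"

definition Xi :: "nat \<Rightarrow> nat \<Rightarrow> (nat \<Rightarrow> real) \<Rightarrow> (nat \<Rightarrow> nat \<Rightarrow> real) \<Rightarrow> (nat \<times> nat) set" where
  "Xi k B p y = {(i, b). i < k \<and> b < B \<and> i \<noteq> istar k B p y \<and> i \<noteq> ibest k y b}"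

definition feasible :: "nat \<Rightarrow> nat \<Rightarrow> (nat \<Rightarrow> nat \<Rightarrow> real) \<Rightarrow> bool" where
  "feasible k B al \<longleftrightarrow> (\<Sum>i<k. \<Sum>b<B. al i b) = 1 \<and> (\<forall>i<k. \<forall>b<B. 0 \<le> al i b)"

definition objective :: "nat \<Rightarrow> nat \<Rightarrow> (nat \<Rightarrow> real) \<Rightarrow> (nat \<Rightarrow> nat \<Rightarrow> real)
    \<Rightarrow> (nat \<Rightarrow> nat \<Rightarrow> real) \<Rightarrow> (nat \<Rightarrow> nat \<Rightarrow> real) \<Rightarrow> real" where
  "objective k B p y lam al =
     Min ((\<lambda>(i, b). Wt k B p y i b * Gval k y lam al i b) ` Xi k B p y)"

definition optimal :: "nat \<Rightarrow> nat \<Rightarrow> (nat \<Rightarrow> real) \<Rightarrow> (nat \<Rightarrow> nat \<Rightarrow> real)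
    \<Rightarrow> (nat \<Rightarrow> nat \<Rightarrow> real) \<Rightarrow> (nat \<Rightarrow> nat \<Rightarrow> real) \<Rightarrow> bool" where
  "optimal k B p y lam al \<longleftrightarrow> feasible k B al \<and>
     (\<forall>be. feasible k B be \<longrightarrow> objective k B p y lam be \<le> objective k B p y lam al)"

end

theory Submission imports Defs begin
lemma ivt_exist:
  fixes S :: "nat set" and A l :: "nat \<Rightarrow> real" and L :: real
  assumes fin: "finite S" and ne: "S \<noteq> {}" and Apos: "\<forall>i\<in>S. A i > 0"
    and lpos: "\<forall>i\<in>S. l i > 0" and Lpos: "L > 0"
  shows "\<exists>u>0. (\<forall>i\<in>S. u < A i) \<and> L\<^sup>2 / u\<^sup>2 = (\<Sum>i\<in>S. (l i)\<^sup>2 / (A i - u)\<^sup>2)"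
proof -
  define m0 where "m0 = Min (A ` S)"
  have m0in: "m0 \<in> A ` S" unfolding m0_def using fin ne by simp
  then obtain i0 where i0: "i0 \<in> S" "A i0 = m0" by auto
  have m0le: "\<forall>i\<in>S. m0 \<le> A i" unfolding m0_def using fin by simp
  have m0pos: "m0 > 0" using i0 Apos by auto
  define R where "R = (\<Sum>i\<in>S. 4 * (l i)\<^sup>2 / (A i)\<^sup>2)"
  have R0: "R \<ge> 0" unfolding R_def by (intro sum_nonneg) auto
  define u1 where "u1 = min (m0/2) (L / (sqrt R + 1))"
  define u2 where "u2 = m0 - m0 * min (1/2) (l i0 / (4 * L))"
  define f where "f u = L\<^sup>2 / u\<^sup>2 - (\<Sum>i\<in>S. (l i)\<^sup>2 / (A i - u)\<^sup>2)" for u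
  have l0: "l i0 > 0" using i0 lpos by auto
  have u1pos: "u1 > 0" unfolding u1_def using m0pos Lpos R0
    by (simp add: add_nonneg_pos)
  have u1le: "u1 \<le> m0/2" unfolding u1_def by (rule min.cobounded1)
  define mu where "mu = min (1/2) (l i0 / (4 * L))"
  have mm: "mu > 0" "mu \<le> 1/2" "mu \<le> l i0 / (4 * L)"
    using l0 Lpos unfolding mu_def by auto
  have "m0 * mu \<le> m0 * (1/2)" using mm m0pos by (intro mult_left_mono) auto
  hence u2ge: "u2 \<ge> m0/2" unfolding u2_def mu_def[symmetric] by simp
  have u2lt: "u2 < m0" unfolding u2_def mu_def[symmetric] using mm m0pos by simp
  have f1: "f u1 \<ge> 0"
  proof -
    have "(\<Sum>i\<in>S. (l i)\<^sup>2 / (A i - u1)\<^sup>2) \<le> R"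
      unfolding R_def
    proof (rule sum_mono)
      fix i assume i: "i \<in> S"
      have Ai: "A i > 0" "m0 \<le> A i" using i Apos m0le by auto
      have h: "A i - u1 \<ge> A i / 2" using Ai u1le by simp
      have "(A i / 2)\<^sup>2 \<le> (A i - u1)\<^sup>2" using h Ai by (intro power_mono) auto
      hence "(l i)\<^sup>2 / (A i - u1)\<^sup>2 \<le> (l i)\<^sup>2 / (A i / 2)\<^sup>2"
        using Ai h u1pos by (intro divide_left_mono mult_pos_pos) auto
      also have "\<dots> = 4 * (l i)\<^sup>2 / (A i)\<^sup>2" by (simp add: power_divide)
      finally show "(l i)\<^sup>2 / (A i - u1)\<^sup>2 \<le> 4 * (l i)\<^sup>2 / (A i)\<^sup>2" .
    qed
    moreover have "L\<^sup>2 / u1\<^sup>2 \<ge> R"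
    proof -
      have "u1 \<le> L / (sqrt R + 1)" unfolding u1_def by (rule min.cobounded2)
      hence "u1 * (sqrt R + 1) \<le> L" using R0
        by (simp add: pos_le_divide_eq add_nonneg_pos)
      hence "sqrt R + 1 \<le> L / u1" using u1pos by (simp add: pos_le_divide_eq mult.commute)
      hence "(sqrt R + 1)\<^sup>2 \<le> (L / u1)\<^sup>2" using R0 by (intro power_mono) auto
      moreover have "R \<le> (sqrt R + 1)\<^sup>2" using R0
        by (simp add: power2_sum real_sqrt_pow2[symmetric])
      ultimately show ?thesis by (simp add: power_divide)
    qed
    ultimately show ?thesis unfolding f_def by simp
  qed
  have f2: "f u2 \<le> 0"
  proof -
    define dl where "dl = m0 - u2"
    have dl1: "dl = m0 * mu" unfolding dl_def u2_def mu_def by simp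
    have dl: "dl > 0" "dl \<le> m0 * (l i0 / (4 * L))" unfolding dl1 using mm m0pos
      by (simp, metis mult_left_mono less_eq_real_def)
    have "L\<^sup>2 / u2\<^sup>2 \<le> L\<^sup>2 / (m0/2)\<^sup>2"
      using u2ge m0pos by (intro divide_left_mono power_mono mult_pos_pos) auto
    also have "\<dots> < (l i0)\<^sup>2 / dl\<^sup>2"
    proof -
      have "dl * (4 * L) \<le> m0 * l i0" using dl Lpos by (simp add: field_simps)
      hence "(dl * (4*L))\<^sup>2 \<le> (m0 * l i0)\<^sup>2" using dl Lpos by (intro power_mono) auto
      hence "16 * dl\<^sup>2 * L\<^sup>2 \<le> m0\<^sup>2 * (l i0)\<^sup>2" by (simp add: power_mult_distrib)
      moreover have "dl\<^sup>2 * L\<^sup>2 > 0" using dl Lpos by simp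
      ultimately have "4 * dl\<^sup>2 * L\<^sup>2 < m0\<^sup>2 * (l i0)\<^sup>2" by linarith
      thus ?thesis using dl m0pos by (simp add: field_simps power_divide)
    qed
    also have "(l i0)\<^sup>2 / dl\<^sup>2 \<le> (\<Sum>i\<in>S. (l i)\<^sup>2 / (A i - u2)\<^sup>2)"
      using member_le_sum[of i0 S "\<lambda>i. (l i)\<^sup>2 / (A i - u2)\<^sup>2"] i0 fin unfolding dl_def
      by auto
    finally show ?thesis unfolding f_def by simp
  qed
  have cont: "\<forall>x. u1 \<le> x \<and> x \<le> u2 \<longrightarrow> isCont f x"
  proof (intro allI impI)
    fix x assume x: "u1 \<le> x \<and> x \<le> u2"
    have xpos: "x \<noteq> 0" using x u1pos by auto
    have "\<forall>i\<in>S. A i - x \<noteq> 0" using x u2lt m0le by force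
    thus "isCont f x" unfolding f_def using xpos
      by (intro continuous_intros) auto
  qed
  have "u1 \<le> u2" using u1le u2ge by simp
  from IVT2[OF f2 f1 this cont] obtain u where u: "u1 \<le> u" "u \<le> u2" "f u = 0" by blast
  show ?thesis
  proof (intro exI conjI ballI)
    show "u > 0" using u u1pos by simp
    show "u < A i" if "i \<in> S" for i using u u2lt m0le that by force
    show "L\<^sup>2 / u\<^sup>2 = (\<Sum>i\<in>S. (l i)\<^sup>2 / (A i - u)\<^sup>2)" using u(3) unfolding f_def by simp
  qed
qed
lemma cs_ident:
  fixes a c x y u v d :: real
  assumes "a>0" "c>0" "x>0" "y>0" "u>0" "v>0"
  shows "(d/(2*(a/x+c/y))) * (u + x\<^sup>2*c/(a*y\<^sup>2)*v) - (d/(2*(a/u+c/v))) * (x + x\<^sup>2*c/(a*y\<^sup>2)*y)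
     = d*c*(v*x-u*y)\<^sup>2/(2*(a/x+c/y)*(a/u+c/v)*u*v*y\<^sup>2)"
proof -
  have p1: "a/x+c/y > 0" "a/u+c/v > 0" using assms by (auto intro: add_pos_pos)
  have e1: "a/x+c/y = (a*y+c*x)/(x*y)" "a/u+c/v = (a*v+c*u)/(u*v)" using assms by (auto simp: field_simps)
  have q: "a*y+c*x > 0" "a*v+c*u>0" using assms by (auto intro: add_pos_pos)
  show ?thesis unfolding e1 using assms q
    by (simp add: divide_simps power2_eq_square) algebra
qed

lemma cs_ineq:
  fixes a c x y u v d :: real
  assumes "a>0" "c>0" "x>0" "y>0" "u>0" "v>0" "d \<ge> 0"
  shows "(d/(2*(a/u+c/v))) * (x + x\<^sup>2*c/(a*y\<^sup>2)*y) \<le> (d/(2*(a/x+c/y))) * (u + x\<^sup>2*c/(a*y\<^sup>2)*v)"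
proof -
  have p1: "a/x+c/y > 0" "a/u+c/v > 0" using assms by (auto intro: add_pos_pos)
  have "d*c*(v*x-u*y)\<^sup>2/(2*(a/x+c/y)*(a/u+c/v)*u*v*y\<^sup>2) \<ge> 0"
    using assms p1 by (intro divide_nonneg_pos mult_nonneg_nonneg mult_pos_pos) auto
  thus ?thesis using cs_ident[OF assms(1-6), of d] by linarith
qed

lemma cs_eq:
  fixes a c x y u v d :: real
  assumes "a>0" "c>0" "x>0" "y>0" "u>0" "v>0" "d > 0"
    and "(d/(2*(a/u+c/v))) * (x + x\<^sup>2*c/(a*y\<^sup>2)*y) = (d/(2*(a/x+c/y))) * (u + x\<^sup>2*c/(a*y\<^sup>2)*v)"
  shows "v*x = u*y"
proof -
  have p1: "a/x+c/y > 0" "a/u+c/v > 0" using assms by (auto intro: add_pos_pos)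
  have "d*c*(v*x-u*y)\<^sup>2/(2*(a/x+c/y)*(a/u+c/v)*u*v*y\<^sup>2) = 0"
    using cs_ident[OF assms(1-6), of d] assms(8) by linarith
  hence "(v*x-u*y)\<^sup>2 = 0" using assms p1 by simp
  thus ?thesis by simp
qed
locale thm3 =
  fixes k B :: nat and p :: "nat \<Rightarrow> real" and y lam :: "nat \<Rightarrow> nat \<Rightarrow> real"
  assumes k2: "2 \<le> k"
    and ppos: "\<forall>b<B. 0 < p b"
    and psum: "(\<Sum>b<B. p b) = 1"
    and lampos: "\<forall>i<k. \<forall>b<B. 0 < lam i b"
    and ib_unique: "\<forall>b<B. \<exists>!i. i < k \<and> (\<forall>j<k. y i b \<le> y j b)"
    and istar_unique: "\<exists>!i. i < k \<and> (\<forall>j<k. freq k B p y j \<le> freq k B p y i)"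
begin

abbreviation ib where "ib b \<equiv> ibest k y b"
abbreviation ist where "ist \<equiv> istar k B p y"
abbreviation Sb where "Sb b \<equiv> {i. i < k \<and> i \<noteq> ib b \<and> i \<noteq> ist}"
abbreviation W where "W \<equiv> Wt k B p y"
abbreviation G where "G \<equiv> Gval k y lam"

lemma ib_prop: assumes "b < B" shows "ib b < k \<and> (\<forall>j<k. y (ib b) b \<le> y j b)"
proof -
  have "\<exists>!i. i < k \<and> (\<forall>j<k. y i b \<le> y j b)" using ib_unique assms by blast
  from theI'[OF this] show ?thesis unfolding ibest_def .
qed

lemma ib_lt: "b < B \<Longrightarrow> ib b < k" using ib_prop by blast

lemma ib_strict: assumes "b < B" "i < k" "i \<noteq> ib b" shows "y (ib b) b < y i b"
proof (rule ccontr)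
  assume "\<not> y (ib b) b < y i b"
  hence "\<forall>j<k. y i b \<le> y j b" using ib_prop[OF assms(1)] by force
  hence "i < k \<and> (\<forall>j<k. y i b \<le> y j b)" using assms by blast
  moreover have "ib b < k \<and> (\<forall>j<k. y (ib b) b \<le> y j b)" using ib_prop[OF assms(1)] .
  moreover have "\<exists>!i. i < k \<and> (\<forall>j<k. y i b \<le> y j b)" using ib_unique assms by blast
  ultimately show False using assms(3) by blast
qed

lemma ist_prop: "ist < k \<and> (\<forall>j<k. freq k B p y j \<le> freq k B p y ist)"
  using theI'[OF istar_unique] unfolding istar_def .

lemma ist_lt: "ist < k" using ist_prop by blast

lemma W_ge1: "W i b \<ge> 1" unfolding Wt_def by simp

lemma Sb_fin: "finite (Sb b)" by (rule finite_subset[of _ "{..<k}"]) auto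

lemma Xi_iff: "(i, b) \<in> Xi k B p y \<longleftrightarrow> b < B \<and> i \<in> Sb b" unfolding Xi_def by auto

lemma Xi_fin: "finite (Xi k B p y)"
  by (rule finite_subset[of _ "{..<k} \<times> {..<B}"]) (auto simp: Xi_def)

lemma Xi_ne: "\<exists>b<B. Sb b \<noteq> {}"
proof -
  have "(\<Sum>i<k. freq k B p y i) = (\<Sum>i<k. \<Sum>b<B. p b * (if i = ib b then 1 else 0))"
    unfolding freq_def ..
  also have "\<dots> = (\<Sum>b<B. \<Sum>i<k. p b * (if i = ib b then 1 else 0))" by (rule sum.swap)
  also have "\<dots> = (\<Sum>b<B. p b)"
  proof (rule sum.cong)
    fix b assume "b \<in> {..<B}"
    hence "ib b < k" using ib_lt by auto
    thus "(\<Sum>i<k. p b * (if i = ib b then 1 else 0)) = p b"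
      by (subst sum_distrib_left[symmetric]) simp
  qed simp
  finally have s1: "(\<Sum>i<k. freq k B p y i) = 1" using psum by simp
  have "\<exists>i<k. freq k B p y i > 0"
  proof (rule ccontr)
    assume "\<not> ?thesis"
    hence "(\<Sum>i<k. freq k B p y i) \<le> 0" by (intro sum_nonpos) auto
    thus False using s1 by simp
  qed
  then obtain i where "i < k" "freq k B p y i > 0" by blast
  hence fpos: "freq k B p y ist > 0" using ist_prop by force
  have "\<exists>b<B. ib b = ist"
  proof (rule ccontr)
    assume "\<not> ?thesis"
    hence "freq k B p y ist = 0" unfolding freq_def by (intro sum.neutral) auto
    thus False using fpos by simp
  qed
  then obtain b where b: "b < B" "ib b = ist" by blast
  define j where "j = (if ist = 0 then 1 else 0::nat)"
  have "j \<in> Sb b" unfolding j_def using b k2 by auto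
  thus ?thesis using b by blast
qed

lemma G_pos_form: assumes "al i b \<noteq> 0" "al (ib b) b \<noteq> 0"
  shows "G al i b = (y i b - y (ib b) b)\<^sup>2 /
     (2 * ((lam i b)\<^sup>2 / al i b + (lam (ib b) b)\<^sup>2 / al (ib b) b))"
  unfolding Gval_def Let_def using assms by simp

lemma G_zero: "al i b = 0 \<or> al (ib b) b = 0 \<Longrightarrow> G al i b = 0"
  unfolding Gval_def Let_def by auto

lemma G_nonneg: assumes "al i b \<ge> 0" "al (ib b) b \<ge> 0" shows "G al i b \<ge> 0"
proof (cases "al i b = 0 \<or> al (ib b) b = 0")
  case True thus ?thesis using G_zero by simp
next
  case False
  hence "al i b > 0" "al (ib b) b > 0" using assms by auto
  thus ?thesis using G_pos_form False by simp
qed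

lemma sum_decomp: assumes "b < B"
  shows "(\<Sum>i<k. be i b) = (\<Sum>i\<in>Sb b. be i b) + be (ib b) b + (if ib b \<noteq> ist then be ist b else 0)"
proof (cases "ib b = ist")
  case True
  have "{..<k} = insert (ib b) (Sb b)" using ib_lt[OF assms] True by auto
  moreover have "ib b \<notin> Sb b" by simp
  ultimately show ?thesis using True Sb_fin by (simp add: add_ac)
next
  case False
  have "{..<k} = insert (ib b) (insert ist (Sb b))" using ib_lt[OF assms] ist_lt by auto
  moreover have "ib b \<notin> insert ist (Sb b)" "ist \<notin> Sb b" using False by auto
  ultimately show ?thesis using False Sb_fin by (simp add: add_ac)
qed

definition good :: "(nat \<Rightarrow> nat \<Rightarrow> real) \<Rightarrow> real \<Rightarrow> bool" where
  "good al c \<longleftrightarrow> feasible k B al \<and> c > 0 \<and>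
     (\<forall>b<B. (al (ib b) b)\<^sup>2 / (lam (ib b) b)\<^sup>2 = (\<Sum>i\<in>Sb b. (al i b)\<^sup>2 / (lam i b)\<^sup>2)) \<and>
     (\<forall>b<B. \<forall>i\<in>Sb b. W i b * G al i b = c) \<and>
     (\<forall>b<B. ib b \<noteq> ist \<longrightarrow> al ist b = 0)"

definition rr :: "(nat \<Rightarrow> nat \<Rightarrow> real) \<Rightarrow> nat \<Rightarrow> nat \<Rightarrow> real" where
  "rr al i b = (al i b)\<^sup>2 * (lam (ib b) b)\<^sup>2 / ((lam i b)\<^sup>2 * (al (ib b) b)\<^sup>2)"

lemma feas_nonneg: "feasible k B al \<Longrightarrow> i < k \<Longrightarrow> b < B \<Longrightarrow> al i b \<ge> 0"
  unfolding feasible_def by blast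

lemma good_pos: assumes "good al c" "b < B" "i \<in> Sb b"
  shows "al i b > 0" "al (ib b) b > 0"
proof -
  have "W i b * G al i b = c" "c > 0" using assms unfolding good_def by auto
  hence "G al i b \<noteq> 0" by auto
  hence nz: "al i b \<noteq> 0" "al (ib b) b \<noteq> 0" using G_zero by blast+
  have "al i b \<ge> 0" "al (ib b) b \<ge> 0" using assms feas_nonneg ib_lt unfolding good_def by auto
  thus "al i b > 0" "al (ib b) b > 0" using nz by auto
qed

lemma rr_nonneg: "rr al i b \<ge> 0" unfolding rr_def by simp

lemma sum_rr: assumes "good al c" "b < B" "Sb b \<noteq> {}"
  shows "(\<Sum>i\<in>Sb b. rr al i b) = 1"
proof -
  obtain i0 where "i0 \<in> Sb b" using assms(3) by blast
  hence ap: "al (ib b) b > 0" using good_pos assms by blast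
  have lp: "lam (ib b) b > 0" using lampos ib_lt assms(2) by blast
  have "(\<Sum>i\<in>Sb b. rr al i b) = (\<Sum>i\<in>Sb b. (al i b)\<^sup>2 / (lam i b)\<^sup>2) / ((al (ib b) b)\<^sup>2 / (lam (ib b) b)\<^sup>2)"
    unfolding rr_def sum_divide_distrib by (rule sum.cong) (auto simp: field_simps)
  also have "\<dots> = 1" using assms ap lp unfolding good_def by auto
  finally show ?thesis .
qed

lemma good_empty: assumes "good al c" "b < B" "Sb b = {}" shows "al (ib b) b = 0"
proof -
  have lp: "lam (ib b) b > 0" using lampos ib_lt assms(2) by blast
  have "(al (ib b) b)\<^sup>2 / (lam (ib b) b)\<^sup>2 = (\<Sum>i\<in>Sb b. (al i b)\<^sup>2 / (lam i b)\<^sup>2)"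
    using assms(1,2) unfolding good_def by blast
  also have "\<dots> = 0" using assms(3) by (simp only: sum.empty)
  finally have "(al (ib b) b)\<^sup>2 / (lam (ib b) b)\<^sup>2 = 0" .
  thus ?thesis using lp by simp
qed

lemma pair_ineq: assumes "good al c" "b < B" "i \<in> Sb b" "be i b \<ge> 0" "be (ib b) b \<ge> 0"
  shows "W i b * G be i b * (al i b + rr al i b * al (ib b) b) \<le> c * (be i b + rr al i b * be (ib b) b)"
proof -
  have ap: "al i b > 0" "al (ib b) b > 0" using good_pos assms by auto
  have lp: "lam i b > 0" "lam (ib b) b > 0" using lampos ib_lt assms(2,3) by auto
  have Wc: "W i b * G al i b = c" "c > 0" using assms unfolding good_def by auto
  have rhs: "c * (be i b + rr al i b * be (ib b) b) \<ge> 0"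
    using Wc assms rr_nonneg by (intro mult_nonneg_nonneg add_nonneg_nonneg) auto
  show ?thesis
  proof (cases "be i b = 0 \<or> be (ib b) b = 0")
    case True thus ?thesis using G_zero rhs by simp
  next
    case False
    hence bp: "be i b > 0" "be (ib b) b > 0" using assms by auto
    have "G be i b * (al i b + rr al i b * al (ib b) b) \<le> G al i b * (be i b + rr al i b * be (ib b) b)"
      unfolding G_pos_form[of be i b, OF bp[THEN less_imp_neq, symmetric]]
        G_pos_form[of al i b, OF ap[THEN less_imp_neq, symmetric]] rr_def
      using cs_ineq[of "(lam i b)\<^sup>2" "(lam (ib b) b)\<^sup>2" "al i b" "al (ib b) b" "be i b" "be (ib b) b"
          "(y i b - y (ib b) b)\<^sup>2"] ap bp lp
      by (simp add: mult.assoc)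
    hence "W i b * (G be i b * (al i b + rr al i b * al (ib b) b)) \<le> W i b * (G al i b * (be i b + rr al i b * be (ib b) b))"
      using W_ge1[of i b] by (intro mult_left_mono) auto
    also have "W i b * (G al i b * (be i b + rr al i b * be (ib b) b)) = (W i b * G al i b) * (be i b + rr al i b * be (ib b) b)"
      by (simp only: mult.assoc)
    finally show ?thesis using Wc by (simp add: mult.assoc)
  qed
qed

lemma pair_eq: assumes "good al c" "b < B" "i \<in> Sb b" "be i b > 0" "be (ib b) b > 0"
  and "W i b * G be i b * (al i b + rr al i b * al (ib b) b) = c * (be i b + rr al i b * be (ib b) b)"
  shows "be (ib b) b * al i b = be i b * al (ib b) b"
proof -
  have ap: "al i b > 0" "al (ib b) b > 0" using good_pos assms by auto
  have lp: "lam i b > 0" "lam (ib b) b > 0" using lampos ib_lt assms(2,3) by auto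
  have Wc: "W i b * G al i b = c" "c > 0" using assms unfolding good_def by auto
  have W0: "W i b > 0" using W_ge1[of i b] by simp
  have "W i b * (G be i b * (al i b + rr al i b * al (ib b) b)) = W i b * (G al i b * (be i b + rr al i b * be (ib b) b))"
    using assms(6) Wc by (simp add: mult.assoc)
  hence e: "G be i b * (al i b + rr al i b * al (ib b) b) = G al i b * (be i b + rr al i b * be (ib b) b)"
    using W0 by simp
  have "y (ib b) b < y i b" using ib_strict assms(2,3) by auto
  hence d: "(y i b - y (ib b) b)\<^sup>2 > 0" by simp
  show ?thesis
    using e unfolding G_pos_form[of be i b, OF assms(4,5)[THEN less_imp_neq, symmetric]]
        G_pos_form[of al i b, OF ap[THEN less_imp_neq, symmetric]] rr_def
    using cs_eq[of "(lam i b)\<^sup>2" "(lam (ib b) b)\<^sup>2" "al i b" "al (ib b) b" "be i b" "be (ib b) b"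
          "(y i b - y (ib b) b)\<^sup>2"] ap assms(4,5) lp d
    by (simp add: mult.assoc)
qed

definition slack :: "(nat \<Rightarrow> nat \<Rightarrow> real) \<Rightarrow> nat \<Rightarrow> real" where
  "slack be b = (if Sb b = {} then be (ib b) b else 0) + (if ib b \<noteq> ist then be ist b else 0)"

lemma slack_nonneg: "feasible k B be \<Longrightarrow> b < B \<Longrightarrow> slack be b \<ge> 0"
  unfolding slack_def using feas_nonneg ib_lt ist_lt by auto

lemma per_b_vv: assumes "good al c" "b < B"
  shows "(\<Sum>i\<in>Sb b. be i b + rr al i b * be (ib b) b) + slack be b = (\<Sum>i<k. be i b)"
proof -
  have "(\<Sum>i\<in>Sb b. be i b + rr al i b * be (ib b) b) = (\<Sum>i\<in>Sb b. be i b) + (\<Sum>i\<in>Sb b. rr al i b) * be (ib b) b"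
    by (simp add: sum.distrib sum_distrib_right)
  moreover have "(\<Sum>i\<in>Sb b. rr al i b) = (if Sb b = {} then 0 else 1)"
    using sum_rr[OF assms] by (cases "Sb b = {}") (simp only: sum.empty, auto)
  ultimately have e: "(\<Sum>i\<in>Sb b. be i b + rr al i b * be (ib b) b) = (\<Sum>i\<in>Sb b. be i b) + (if Sb b = {} then 0 else 1) * be (ib b) b" by simp
  show ?thesis
  proof (cases "Sb b = {}")
    case True
    have "(\<Sum>i\<in>Sb b. be i b) = 0" using True by (simp only: sum.empty)
    thus ?thesis unfolding e slack_def if_P[OF True] using sum_decomp[OF assms(2), of be] by simp
  next
    case False
    thus ?thesis unfolding e slack_def if_not_P[OF False] using sum_decomp[OF assms(2), of be] by simp
  qed
qed

lemma per_b_ww: assumes "good al c" "b < B"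
  shows "(\<Sum>i\<in>Sb b. al i b + rr al i b * al (ib b) b) = (\<Sum>i<k. al i b)"
proof -
  have "slack al b = 0" unfolding slack_def using good_empty[OF assms] assms unfolding good_def by auto
  thus ?thesis using per_b_vv[OF assms, of al] by simp
qed

lemma tot: "feasible k B be \<Longrightarrow> (\<Sum>b<B. \<Sum>i<k. be i b) = 1"
  unfolding feasible_def by (simp add: sum.swap[of _ "{..<B}"])

lemma obj_le: assumes "b < B" "i \<in> Sb b"
  shows "objective k B p y lam be \<le> W i b * G be i b"
proof -
  have "(i, b) \<in> Xi k B p y" using assms Xi_iff by blast
  hence "W i b * G be i b \<in> (\<lambda>(i, b). W i b * G be i b) ` Xi k B p y" by force
  thus ?thesis unfolding objective_def using Xi_fin by (intro Min_le) auto
qed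

lemma upper: assumes g: "good al c" and f: "feasible k B be"
  shows "objective k B p y lam be \<le> c"
proof -
  define m where "m = objective k B p y lam be"
  have "(\<Sum>b<B. \<Sum>i\<in>Sb b. m * (al i b + rr al i b * al (ib b) b))
      \<le> (\<Sum>b<B. \<Sum>i\<in>Sb b. c * (be i b + rr al i b * be (ib b) b))"
  proof (intro sum_mono)
    fix b i assume b: "b \<in> {..<B}" and i: "i \<in> Sb b"
    have ww: "al i b + rr al i b * al (ib b) b \<ge> 0"
      using good_pos[OF g _ i] b rr_nonneg by (simp add: add_nonneg_nonneg)
    have "m * (al i b + rr al i b * al (ib b) b) \<le> W i b * G be i b * (al i b + rr al i b * al (ib b) b)"
      using obj_le[of b i be] b i ww unfolding m_def by (intro mult_right_mono) auto
    also have "\<dots> \<le> c * (be i b + rr al i b * be (ib b) b)"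
      using pair_ineq[OF g, of b i be] b i f feas_nonneg ib_lt by auto
    finally show "m * (al i b + rr al i b * al (ib b) b) \<le> c * (be i b + rr al i b * be (ib b) b)" .
  qed
  also have "\<dots> = (\<Sum>b<B. c * (\<Sum>i\<in>Sb b. be i b + rr al i b * be (ib b) b))"
    by (simp only: sum_distrib_left)
  also have "\<dots> = (\<Sum>b<B. c * ((\<Sum>i<k. be i b) - slack be b))"
  proof (intro sum.cong refl)
    fix b assume "b \<in> {..<B}"
    hence "(\<Sum>i\<in>Sb b. be i b + rr al i b * be (ib b) b) = (\<Sum>i<k. be i b) - slack be b"
      using per_b_vv[OF g, of b be] by simp
    thus "c * (\<Sum>i\<in>Sb b. be i b + rr al i b * be (ib b) b) = c * ((\<Sum>i<k. be i b) - slack be b)" by simp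
  qed
  also have "\<dots> = c * (\<Sum>b<B. (\<Sum>i<k. be i b) - slack be b)"
    by (simp only: sum_distrib_left)
  also have "\<dots> \<le> c * (\<Sum>b<B. (\<Sum>i<k. be i b))"
    using g slack_nonneg[OF f] unfolding good_def
    by (intro mult_left_mono sum_mono) auto
  also have "\<dots> = c" using tot[OF f] by simp
  finally have "(\<Sum>b<B. \<Sum>i\<in>Sb b. m * (al i b + rr al i b * al (ib b) b)) \<le> c" .
  moreover have "(\<Sum>b<B. \<Sum>i\<in>Sb b. m * (al i b + rr al i b * al (ib b) b)) = m"
    using per_b_ww[OF g] tot[of al] g unfolding good_def by (simp add: sum_distrib_left[symmetric])
  ultimately show ?thesis unfolding m_def by simp
qed

lemma eqcase: assumes g: "good al c" and f: "feasible k B be" and ge: "c \<le> objective k B p y lam be"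
  shows "(\<forall>b<B. (be (ib b) b)\<^sup>2 / (lam (ib b) b)\<^sup>2 = (\<Sum>i\<in>Sb b. (be i b)\<^sup>2 / (lam i b)\<^sup>2))
      \<and> (\<forall>(i, b)\<in>Xi k B p y. \<forall>(j, b')\<in>Xi k B p y. W i b * G be i b = W j b' * G be j b')
      \<and> (\<forall>b<B. ib b \<noteq> ist \<longrightarrow> be ist b = 0)"
proof -
  define ww where "ww i b = al i b + rr al i b * al (ib b) b" for i b
  define vv where "vv i b = be i b + rr al i b * be (ib b) b" for i b
  define e1 where "e1 i b = (W i b * G be i b - c) * ww i b" for i b
  define e2 where "e2 i b = c * vv i b - W i b * G be i b * ww i b" for i b
  have c0: "c > 0" using g unfolding good_def by simp
  have wwp: "ww i b > 0" if "b < B" "i \<in> Sb b" for i b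
    using good_pos[OF g that] rr_nonneg[of al i b] unfolding ww_def by (simp add: add_pos_nonneg)
  have e1nn: "e1 i b \<ge> 0" if "b < B" "i \<in> Sb b" for i b
  proof -
    have "c \<le> W i b * G be i b" using ge obj_le[OF that, of be] by simp
    thus ?thesis unfolding e1_def using wwp[OF that] by simp
  qed
  have e2nn: "e2 i b \<ge> 0" if "b < B" "i \<in> Sb b" for i b
    using pair_ineq[OF g that, of be] f feas_nonneg ib_lt that unfolding e2_def ww_def vv_def by auto
  define F where "F b = (\<Sum>i\<in>Sb b. e1 i b) + (\<Sum>i\<in>Sb b. e2 i b) + c * slack be b" for b
  have Fnn: "F b \<ge> 0" if "b < B" for b
    unfolding F_def using e1nn e2nn that slack_nonneg[OF f that] c0
    by (intro add_nonneg_nonneg sum_nonneg) auto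
  have Feq: "F b = c * (\<Sum>i<k. be i b) - c * (\<Sum>i<k. al i b)" if b: "b < B" for b
  proof -
    have "(\<Sum>i\<in>Sb b. e1 i b) + (\<Sum>i\<in>Sb b. e2 i b) = (\<Sum>i\<in>Sb b. c * vv i b - c * ww i b)"
      unfolding sum.distrib[symmetric] e1_def e2_def by (intro sum.cong) (auto simp: algebra_simps)
    also have "\<dots> = c * (\<Sum>i\<in>Sb b. vv i b) - c * (\<Sum>i\<in>Sb b. ww i b)"
      by (simp add: sum_subtractf sum_distrib_left)
    finally have "F b = c * ((\<Sum>i\<in>Sb b. vv i b) + slack be b) - c * (\<Sum>i\<in>Sb b. ww i b)"
      unfolding F_def by (simp add: algebra_simps)
    thus ?thesis using per_b_vv[OF g b, of be] per_b_ww[OF g b] unfolding vv_def ww_def by simp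
  qed
  have "(\<Sum>b<B. F b) = c * (\<Sum>b<B. \<Sum>i<k. be i b) - c * (\<Sum>b<B. \<Sum>i<k. al i b)"
    using Feq by (simp add: sum_subtractf sum_distrib_left)
  also have "\<dots> = 0" using tot[OF f] tot[of al] g unfolding good_def by simp
  finally have "(\<Sum>b<B. F b) = 0" .
  hence F0: "F b = 0" if "b < B" for b
    using sum_nonneg_eq_0_iff[of "{..<B}" F] Fnn that by auto
  have parts: "(\<Sum>i\<in>Sb b. e1 i b) = 0 \<and> (\<Sum>i\<in>Sb b. e2 i b) = 0 \<and> slack be b = 0" if b: "b < B" for b
  proof -
    have "(\<Sum>i\<in>Sb b. e1 i b) \<ge> 0" "(\<Sum>i\<in>Sb b. e2 i b) \<ge> 0"
      using e1nn e2nn b by (auto intro: sum_nonneg)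
    moreover have "c * slack be b \<ge> 0" using c0 slack_nonneg[OF f b] by simp
    ultimately show ?thesis using F0[OF b] c0 unfolding F_def by (simp add: add_nonneg_eq_0_iff)
  qed
  have e10: "e1 i b = 0" if "b < B" "i \<in> Sb b" for i b
    using parts[OF that(1)] sum_nonneg_eq_0_iff[OF Sb_fin[of b], of "\<lambda>i. e1 i b"] e1nn that by auto
  have e20: "e2 i b = 0" if "b < B" "i \<in> Sb b" for i b
    using parts[OF that(1)] sum_nonneg_eq_0_iff[OF Sb_fin[of b], of "\<lambda>i. e2 i b"] e2nn that by auto
  have WG: "W i b * G be i b = c" if "b < B" "i \<in> Sb b" for i b
    using e10[OF that] wwp[OF that] unfolding e1_def by simp
  have bpos: "be i b > 0 \<and> be (ib b) b > 0" if "b < B" "i \<in> Sb b" for i b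
  proof -
    have "G be i b \<noteq> 0" using WG[OF that] c0 by auto
    hence "be i b \<noteq> 0" "be (ib b) b \<noteq> 0" using G_zero by blast+
    moreover have "be i b \<ge> 0" "be (ib b) b \<ge> 0" using f feas_nonneg ib_lt that by auto
    ultimately show ?thesis by auto
  qed
  have propo: "be (ib b) b * al i b = be i b * al (ib b) b" if "b < B" "i \<in> Sb b" for i b
    using pair_eq[OF g that] bpos[OF that] e20[OF that] unfolding e2_def ww_def vv_def by simp
  have sl: "slack be b = 0" if "b < B" for b using parts[OF that] by simp
  have C3: "\<forall>b<B. ib b \<noteq> ist \<longrightarrow> be ist b = 0"
  proof (intro allI impI)
    fix b assume b: "b < B" "ib b \<noteq> ist"
    have "(if Sb b = {} then be (ib b) b else 0) \<ge> 0" using f feas_nonneg ib_lt b by auto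
    moreover have "be ist b \<ge> 0" using f feas_nonneg ist_lt b by auto
    ultimately show "be ist b = 0" using sl[OF b(1)] b(2) unfolding slack_def by simp
  qed
  have C2: "\<forall>(i, b)\<in>Xi k B p y. \<forall>(j, b')\<in>Xi k B p y. W i b * G be i b = W j b' * G be j b'"
    using WG Xi_iff by auto
  have C1: "(be (ib b) b)\<^sup>2 / (lam (ib b) b)\<^sup>2 = (\<Sum>i\<in>Sb b. (be i b)\<^sup>2 / (lam i b)\<^sup>2)" if b: "b < B" for b
  proof (cases "Sb b = {}")
    case True
    have "(if ib b \<noteq> ist then be ist b else 0) \<ge> 0" using f feas_nonneg ist_lt b by auto
    moreover have "be (ib b) b \<ge> 0" using f feas_nonneg ib_lt b by auto
    ultimately have "be (ib b) b = 0" using sl[OF b] unfolding slack_def if_P[OF True] by simp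
    moreover have "(\<Sum>i\<in>Sb b. (be i b)\<^sup>2 / (lam i b)\<^sup>2) = 0" using True by (simp only: sum.empty)
    ultimately show ?thesis by simp
  next
    case False
    then obtain i0 where i0: "i0 \<in> Sb b" by blast
    have ap: "al (ib b) b > 0" using good_pos[OF g b i0] by simp
    define t where "t = be (ib b) b / al (ib b) b"
    have bi: "be i b = t * al i b" if "i \<in> Sb b" for i
      using propo[OF b that] ap unfolding t_def by (simp add: field_simps)
    have "(\<Sum>i\<in>Sb b. (be i b)\<^sup>2 / (lam i b)\<^sup>2) = (\<Sum>i\<in>Sb b. t\<^sup>2 * ((al i b)\<^sup>2 / (lam i b)\<^sup>2))"
      using bi by (intro sum.cong) (auto simp: power_mult_distrib)
    also have "\<dots> = t\<^sup>2 * (\<Sum>i\<in>Sb b. (al i b)\<^sup>2 / (lam i b)\<^sup>2)"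
      by (simp only: sum_distrib_left)
    also have "\<dots> = t\<^sup>2 * ((al (ib b) b)\<^sup>2 / (lam (ib b) b)\<^sup>2)"
      using g b unfolding good_def by simp
    also have "\<dots> = (be (ib b) b)\<^sup>2 / (lam (ib b) b)\<^sup>2"
      using ap unfolding t_def by (simp add: power_divide)
    finally show ?thesis by simp
  qed
  show ?thesis using C1 C2 C3 by blast
qed

lemma G_pos: assumes "b < B" "i \<in> Sb b" "al i b > 0" "al (ib b) b > 0"
  shows "G al i b > 0"
proof -
  have lp: "lam i b > 0" "lam (ib b) b > 0" using lampos ib_lt assms(1,2) by auto
  have "y (ib b) b < y i b" using ib_strict assms(1,2) by auto
  hence d: "(y i b - y (ib b) b)\<^sup>2 > 0" by simp
  have "(lam i b)\<^sup>2 / al i b + (lam (ib b) b)\<^sup>2 / al (ib b) b > 0"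
    using lp assms by (intro add_pos_pos divide_pos_pos) auto
  thus ?thesis using G_pos_form[of al i b] assms d by simp
qed

lemma good_WG: assumes "good al c" "b < B" "i \<in> Sb b" shows "W i b * G al i b = c"
proof -
  have "\<forall>b<B. \<forall>i\<in>Sb b. W i b * G al i b = c" using assms(1) unfolding good_def by (elim conjE) assumption
  thus ?thesis using assms(2,3) by simp
qed

lemma obj_good: assumes "good al c" shows "objective k B p y lam al = c"
proof -
  obtain b0 where b0: "b0 < B" "Sb b0 \<noteq> {}" using Xi_ne by blast
  then obtain i0 where i0: "i0 \<in> Sb b0" by blast
  hence ne: "(i0, b0) \<in> Xi k B p y" using b0 Xi_iff[of i0 b0] by blast
  have e: "(\<lambda>(i, b). W i b * G al i b) ` Xi k B p y = {c}"
  proof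
    show "(\<lambda>(i, b). W i b * G al i b) ` Xi k B p y \<subseteq> {c}"
    proof (rule subsetI)
      fix z assume "z \<in> (\<lambda>(i, b). W i b * G al i b) ` Xi k B p y"
      then obtain x where x: "x \<in> Xi k B p y" "z = (\<lambda>(i, b). W i b * G al i b) x" by blast
      obtain i b where xe: "x = (i, b)" by (cases x)
      have bb: "b < B" "i \<in> Sb b" using x(1)[unfolded xe] Xi_iff[of i b] by blast+
      have "z = W i b * G al i b" using x(2)[unfolded xe case_prod_conv] .
      thus "z \<in> {c}" using good_WG[OF assms bb] by simp
    qed
    have "(\<lambda>(i, b). W i b * G al i b) (i0, b0) = c"
      using good_WG[OF assms b0(1) i0] by (simp only: case_prod_conv)
    hence "c \<in> (\<lambda>(i, b). W i b * G al i b) ` Xi k B p y" by (rule image_eqI[OF sym ne])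
    thus "{c} \<subseteq> (\<lambda>(i, b). W i b * G al i b) ` Xi k B p y" by blast
  qed
  show ?thesis unfolding objective_def e by (rule Min_singleton)
qed

lemma conds_good: assumes f: "feasible k B al"
  and C1: "\<forall>b<B. (al (ib b) b)\<^sup>2 / (lam (ib b) b)\<^sup>2 = (\<Sum>i\<in>Sb b. (al i b)\<^sup>2 / (lam i b)\<^sup>2)"
  and C2: "\<forall>(i, b)\<in>Xi k B p y. \<forall>(j, b')\<in>Xi k B p y. W i b * G al i b = W j b' * G al j b'"
  and C3: "\<forall>b<B. ib b \<noteq> ist \<longrightarrow> al ist b = 0"
  shows "\<exists>c. good al c"
proof -
  obtain b0 where b0: "b0 < B" "Sb b0 \<noteq> {}" using Xi_ne by blast
  then obtain i0 where i0: "i0 \<in> Sb b0" by blast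
  define c where "c = W i0 b0 * G al i0 b0"
  have allc: "W i b * G al i b = c" if "b < B" "i \<in> Sb b" for i b
  proof -
    have x1: "(i, b) \<in> Xi k B p y" using that Xi_iff[of i b] by blast
    have x2: "(i0, b0) \<in> Xi k B p y" using b0 i0 Xi_iff[of i0 b0] by blast
    have "\<forall>(j, b')\<in>Xi k B p y. W i b * G al i b = W j b' * G al j b'"
      using bspec[OF C2 x1] by simp
    from bspec[OF this x2] show ?thesis unfolding c_def by simp
  qed
  have "al i0 b0 \<ge> 0" "al (ib b0) b0 \<ge> 0" using feas_nonneg[OF f] ib_lt[OF b0(1)] b0 i0 by auto
  hence "G al i0 b0 \<ge> 0" by (rule G_nonneg)
  hence c0: "c \<ge> 0" unfolding c_def using W_ge1[of i0 b0] by simp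
  have "c \<noteq> 0"
  proof
    assume cz: "c = 0"
    have G0: "G al i b = 0" if "b < B" "i \<in> Sb b" for i b
      using allc[OF that] cz W_ge1[of i b] by simp
    have colz: "(\<Sum>i<k. al i b) = 0" if b: "b < B" for b
    proof -
      have nn: "al i b \<ge> 0" if "i < k" for i using feas_nonneg[OF f that b] .
      have lp: "lam i b > 0" if "i < k" for i using lampos that b by auto
      have ib0: "al (ib b) b = 0"
      proof (rule ccontr)
        assume "al (ib b) b \<noteq> 0"
        hence bp: "al (ib b) b > 0" using nn ib_lt b by force
        have "al i b = 0" if "i \<in> Sb b" for i
        proof (rule ccontr)
          assume "al i b \<noteq> 0"
          hence "al i b > 0" using nn that by force
          thus False using G_pos[of b i al] b that bp G0[OF b that] by simp
        qed
        hence "(\<Sum>i\<in>Sb b. (al i b)\<^sup>2 / (lam i b)\<^sup>2) = 0" by simp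
        moreover have "(al (ib b) b)\<^sup>2 / (lam (ib b) b)\<^sup>2 = (\<Sum>i\<in>Sb b. (al i b)\<^sup>2 / (lam i b)\<^sup>2)"
          using C1 b by blast
        ultimately have "(al (ib b) b)\<^sup>2 / (lam (ib b) b)\<^sup>2 = 0" by simp
        thus False using bp lp[OF ib_lt[OF b]] by simp
      qed
      have e: "(al (ib b) b)\<^sup>2 / (lam (ib b) b)\<^sup>2 = (\<Sum>i\<in>Sb b. (al i b)\<^sup>2 / (lam i b)\<^sup>2)"
        using C1 b by blast
      have "(\<Sum>i\<in>Sb b. (al i b)\<^sup>2 / (lam i b)\<^sup>2) = 0" using e ib0 by simp
      hence zz: "\<forall>i\<in>Sb b. (al i b)\<^sup>2 / (lam i b)\<^sup>2 = 0"
        using sum_nonneg_eq_0_iff[OF Sb_fin[of b], of "\<lambda>i. (al i b)\<^sup>2 / (lam i b)\<^sup>2"] by auto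
      have "\<forall>i\<in>Sb b. al i b = 0"
      proof
        fix i assume i: "i \<in> Sb b"
        have "(al i b)\<^sup>2 / (lam i b)\<^sup>2 = 0" using zz i by blast
        moreover have "lam i b > 0" using lp i by simp
        ultimately show "al i b = 0" by simp
      qed
      hence "(\<Sum>i\<in>Sb b. al i b) = 0" by simp
      thus ?thesis using sum_decomp[OF b, of al] ib0 C3 b by simp
    qed
    have "(\<Sum>b<B. \<Sum>i<k. al i b) = 0" using colz by simp
    thus False using tot[OF f] by simp
  qed
  hence "c > 0" using c0 by simp
  have A4: "\<forall>b<B. \<forall>i\<in>Sb b. W i b * G al i b = c" using allc by blast
  have "good al c" unfolding good_def using f \<open>c > 0\<close> C1 A4 C3 by (intro conjI) assumption+
  thus ?thesis by blast
qed

lemma hh1: fixes x u T :: real assumes "x>0" "u>0" "T>0"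
  shows "(x\<^sup>2/u/T)\<^sup>2/x\<^sup>2 = (x\<^sup>2/u\<^sup>2)/T\<^sup>2"
  using assms by (simp add: power_divide power2_eq_square)
lemma hh2: fixes x u T :: real assumes "x>0" "u>0" "T>0"
  shows "x\<^sup>2 / (x\<^sup>2/u/T) = u * T"
  using assms by simp
lemma hh3: fixes W d T :: real assumes "W>0" "d>0" "T>0"
  shows "W * (d / (2 * (W * d / 2 * T))) = 1/T"
  using assms by simp

definition AA :: "nat \<Rightarrow> nat \<Rightarrow> real" where
  "AA i b = W i b * (y i b - y (ib b) b)\<^sup>2 / 2"

definition ub :: "nat \<Rightarrow> real" where
  "ub b = (SOME u. u > 0 \<and> (\<forall>i\<in>Sb b. u < AA i b) \<and>
     (lam (ib b) b)\<^sup>2 / u\<^sup>2 = (\<Sum>i\<in>Sb b. (lam i b)\<^sup>2 / (AA i b - u)\<^sup>2))"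

lemma AA_pos: "b < B \<Longrightarrow> i \<in> Sb b \<Longrightarrow> AA i b > 0"
  unfolding AA_def using ib_strict[of b i] W_ge1[of i b] by (simp add: mult_pos_pos)

lemma ub_prop: assumes "b < B" "Sb b \<noteq> {}"
  shows "ub b > 0 \<and> (\<forall>i\<in>Sb b. ub b < AA i b) \<and>
     (lam (ib b) b)\<^sup>2 / (ub b)\<^sup>2 = (\<Sum>i\<in>Sb b. (lam i b)\<^sup>2 / (AA i b - ub b)\<^sup>2)"
proof -
  have "\<exists>u>0. (\<forall>i\<in>Sb b. u < AA i b) \<and>
     (lam (ib b) b)\<^sup>2 / u\<^sup>2 = (\<Sum>i\<in>Sb b. (lam i b)\<^sup>2 / (AA i b - u)\<^sup>2)"
    using assms AA_pos lampos ib_lt Sb_fin by (intro ivt_exist) auto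
  hence "\<exists>u. u > 0 \<and> (\<forall>i\<in>Sb b. u < AA i b) \<and>
     (lam (ib b) b)\<^sup>2 / u\<^sup>2 = (\<Sum>i\<in>Sb b. (lam i b)\<^sup>2 / (AA i b - u)\<^sup>2)" by blast
  from someI_ex[OF this] show ?thesis unfolding ub_def .
qed

definition rho :: "nat \<Rightarrow> nat \<Rightarrow> real" where
  "rho i b = (if b < B \<and> Sb b \<noteq> {} then
     (if i = ib b then (lam (ib b) b)\<^sup>2 / ub b
      else if i \<in> Sb b then (lam i b)\<^sup>2 / (AA i b - ub b) else 0) else 0)"

lemma rho_nn: "rho i b \<ge> 0"
proof -
  have "(lam i b)\<^sup>2 / (AA i b - ub b) \<ge> 0" if "b < B" "Sb b \<noteq> {}" "i \<in> Sb b"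
    using ub_prop[OF that(1,2)] that(3) by auto
  moreover have "(lam (ib b) b)\<^sup>2 / ub b \<ge> 0" if "b < B" "Sb b \<noteq> {}"
    using ub_prop[OF that] by auto
  ultimately show ?thesis unfolding rho_def by auto
qed

lemma exists_good: "\<exists>al c. good al c"
proof -
  define T where "T = (\<Sum>i<k. \<Sum>b<B. rho i b)"
  obtain b0 where b0: "b0 < B" "Sb b0 \<noteq> {}" using Xi_ne by blast
  then obtain i0 where i0: "i0 \<in> Sb b0" by blast
  have "rho i0 b0 = (lam i0 b0)\<^sup>2 / (AA i0 b0 - ub b0)" unfolding rho_def using b0 i0 by auto
  moreover have "AA i0 b0 - ub b0 > 0" using ub_prop[OF b0] i0 by auto
  moreover have "lam i0 b0 > 0" using lampos b0 i0 by auto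
  ultimately have r0: "rho i0 b0 > 0" by simp
  have "rho i0 b0 \<le> (\<Sum>b<B. rho i0 b)"
    using member_le_sum[of b0 "{..<B}" "rho i0"] b0 rho_nn by auto
  also have "\<dots> \<le> T" unfolding T_def
    using member_le_sum[of i0 "{..<k}" "\<lambda>i. \<Sum>b<B. rho i b"] i0 rho_nn by (auto intro: sum_nonneg)
  finally have Tp: "T > 0" using r0 by simp
  define al where "al i b = rho i b / T" for i b
  have "(\<Sum>i<k. \<Sum>b<B. al i b) = T / T" unfolding al_def T_def by (simp only: sum_divide_distrib)
  hence feas: "feasible k B al" unfolding feasible_def using Tp rho_nn unfolding al_def by simp
  have C3: "\<forall>b<B. ib b \<noteq> ist \<longrightarrow> al ist b = 0"
    unfolding al_def rho_def by auto
  have C1: "(al (ib b) b)\<^sup>2 / (lam (ib b) b)\<^sup>2 = (\<Sum>i\<in>Sb b. (al i b)\<^sup>2 / (lam i b)\<^sup>2)" if b: "b < B" for b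
  proof (cases "Sb b = {}")
    case True
    have "(\<Sum>i\<in>Sb b. (al i b)\<^sup>2 / (lam i b)\<^sup>2) = 0" using True by (simp only: sum.empty)
    moreover have "al (ib b) b = 0" unfolding al_def rho_def using True by simp
    ultimately show ?thesis by simp
  next
    case False
    note up = ub_prop[OF b False]
    have lb: "lam (ib b) b > 0" using lampos ib_lt b by auto
    have ab: "al (ib b) b = (lam (ib b) b)\<^sup>2 / ub b / T" unfolding al_def rho_def using b False by simp
    have "(al (ib b) b)\<^sup>2 / (lam (ib b) b)\<^sup>2 = ((lam (ib b) b)\<^sup>2 / (ub b)\<^sup>2) / T\<^sup>2"
      unfolding ab using hh1[of "lam (ib b) b" "ub b" T] lb up Tp by simp
    also have "\<dots> = (\<Sum>i\<in>Sb b. ((lam i b)\<^sup>2 / (AA i b - ub b)\<^sup>2) / T\<^sup>2)"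
      using up by (simp add: sum_divide_distrib)
    also have "\<dots> = (\<Sum>i\<in>Sb b. (al i b)\<^sup>2 / (lam i b)\<^sup>2)"
    proof (rule sum.cong[OF refl])
      fix i assume i: "i \<in> Sb b"
      have li: "lam i b > 0" using lampos i b by auto
      have Au: "AA i b - ub b > 0" using up i by auto
      have ai: "al i b = (lam i b)\<^sup>2 / (AA i b - ub b) / T" unfolding al_def rho_def using b False i by simp
      show "((lam i b)\<^sup>2 / (AA i b - ub b)\<^sup>2) / T\<^sup>2 = (al i b)\<^sup>2 / (lam i b)\<^sup>2"
        unfolding ai using hh1[of "lam i b" "AA i b - ub b" T] li Au Tp by simp
    qed
    finally show ?thesis .
  qed
  have C2: "W i b * G al i b = 1 / T" if b: "b < B" and i: "i \<in> Sb b" for i b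
  proof -
    have ne: "Sb b \<noteq> {}" using i by blast
    note up = ub_prop[OF b ne]
    have li: "lam i b > 0" "lam (ib b) b > 0" using lampos i b ib_lt by auto
    have Au: "AA i b - ub b > 0" using up i by auto
    have ai: "al i b = (lam i b)\<^sup>2 / (AA i b - ub b) / T" unfolding al_def rho_def using b ne i by simp
    have ab: "al (ib b) b = (lam (ib b) b)\<^sup>2 / ub b / T" unfolding al_def rho_def using b ne by simp
    have aip: "al i b > 0" "al (ib b) b > 0" unfolding ai ab using li Au up Tp by auto
    have h1: "(lam i b)\<^sup>2 / al i b = (AA i b - ub b) * T" unfolding ai using hh2[of "lam i b" "AA i b - ub b" T] li Au Tp by simp
    have h2: "(lam (ib b) b)\<^sup>2 / al (ib b) b = ub b * T" unfolding ab using hh2[of "lam (ib b) b" "ub b" T] li up Tp by simp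
    have h12: "(AA i b - ub b) * T + ub b * T = AA i b * T" by (simp add: algebra_simps)
    have "y (ib b) b < y i b" using ib_strict b i by auto
    hence d: "(y i b - y (ib b) b)\<^sup>2 > 0" by simp
    have W0: "W i b > 0" using W_ge1[of i b] by simp
    have "W i b * G al i b = W i b * ((y i b - y (ib b) b)\<^sup>2 / (2 * (AA i b * T)))"
      using G_pos_form[of al i b] aip unfolding h1 h2 h12 by simp
    also have "\<dots> = 1 / T" unfolding AA_def using hh3[OF W0 d Tp] by simp
    finally show ?thesis .
  qed
  have A1: "\<forall>b<B. (al (ib b) b)\<^sup>2 / (lam (ib b) b)\<^sup>2 = (\<Sum>i\<in>Sb b. (al i b)\<^sup>2 / (lam i b)\<^sup>2)"
    using C1 by blast
  have A4: "\<forall>b<B. \<forall>i\<in>Sb b. W i b * G al i b = 1 / T" using C2 by blast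
  have "1 / T > 0" using Tp by simp
  hence "good al (1 / T)" unfolding good_def using feas A1 A4 C3 by (intro conjI) assumption+
  thus ?thesis by blast
qed

end

theorem theorem3:
  fixes k B :: nat and p :: "nat \<Rightarrow> real" and y lam al :: "nat \<Rightarrow> nat \<Rightarrow> real"
  assumes k2: "2 \<le> k"
    and ppos: "\<forall>b<B. 0 < p b"
    and psum: "(\<Sum>b<B. p b) = 1"
    and lampos: "\<forall>i<k. \<forall>b<B. 0 < lam i b"
    and ib_unique: "\<forall>b<B. \<exists>!i. i < k \<and> (\<forall>j<k. y i b \<le> y j b)"
    and istar_unique: "\<exists>!i. i < k \<and> (\<forall>j<k. freq k B p y j \<le> freq k B p y i)"
    and feas: "feasible k B al"
  shows "optimal k B p y lam al \<longleftrightarrow>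
     ((\<forall>b<B. (al (ibest k y b) b)\<^sup>2 / (lam (ibest k y b) b)\<^sup>2 =
              (\<Sum>i\<in>{i. i < k \<and> i \<noteq> ibest k y b \<and> i \<noteq> istar k B p y}. (al i b)\<^sup>2 / (lam i b)\<^sup>2))
      \<and> (\<forall>(i, b)\<in>Xi k B p y. \<forall>(j, b')\<in>Xi k B p y.
              Wt k B p y i b * Gval k y lam al i b = Wt k B p y j b' * Gval k y lam al j b')
      \<and> (\<forall>b<B. ibest k y b \<noteq> istar k B p y \<longrightarrow> al (istar k B p y) b = 0))"
proof -
  interpret thm3 k B p y lam
    using k2 ppos psum lampos ib_unique istar_unique by (rule thm3.intro)
  show ?thesis
  proof
    assume opt: "optimal k B p y lam al"
    obtain al0 c where g: "good al0 c" using exists_good by blast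
    have f0: "feasible k B al0" using g unfolding good_def by (elim conjE) assumption
    have "\<forall>be. feasible k B be \<longrightarrow> objective k B p y lam be \<le> objective k B p y lam al"
      using opt unfolding optimal_def by (elim conjE) assumption
    hence "objective k B p y lam al0 \<le> objective k B p y lam al" using f0 by blast
    hence "c \<le> objective k B p y lam al" using obj_good[OF g] by simp
    from eqcase[OF g feas this]
    show "(\<forall>b<B. (al (ibest k y b) b)\<^sup>2 / (lam (ibest k y b) b)\<^sup>2 =
              (\<Sum>i\<in>{i. i < k \<and> i \<noteq> ibest k y b \<and> i \<noteq> istar k B p y}. (al i b)\<^sup>2 / (lam i b)\<^sup>2))
      \<and> (\<forall>(i, b)\<in>Xi k B p y. \<forall>(j, b')\<in>Xi k B p y.
              Wt k B p y i b * Gval k y lam al i b = Wt k B p y j b' * Gval k y lam al j b')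
      \<and> (\<forall>b<B. ibest k y b \<noteq> istar k B p y \<longrightarrow> al (istar k B p y) b = 0)" .
  next
    assume conds: "(\<forall>b<B. (al (ibest k y b) b)\<^sup>2 / (lam (ibest k y b) b)\<^sup>2 =
              (\<Sum>i\<in>{i. i < k \<and> i \<noteq> ibest k y b \<and> i \<noteq> istar k B p y}. (al i b)\<^sup>2 / (lam i b)\<^sup>2))
      \<and> (\<forall>(i, b)\<in>Xi k B p y. \<forall>(j, b')\<in>Xi k B p y.
              Wt k B p y i b * Gval k y lam al i b = Wt k B p y j b' * Gval k y lam al j b')
      \<and> (\<forall>b<B. ibest k y b \<noteq> istar k B p y \<longrightarrow> al (istar k B p y) b = 0)"
    then obtain c where g: "good al c" using conds_good[OF feas] by (elim conjE) blast
    have "\<forall>be. feasible k B be \<longrightarrow> objective k B p y lam be \<le> objective k B p y lam al"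
      using upper[OF g] obj_good[OF g] by simp
    thus "optimal k B p y lam al" unfolding optimal_def using feas by (intro conjI)
  qed
qed

end
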